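(* The Sierpiński gasket iterated graph system and the pentagonal Sierpiński carpet iterated graph system are of bounded geometry.
   Context: Graphs: $(V,E)$, $V$ finite non-empty, $E\subseteq V\times V$, $(x,y)\in E\Rightarrow(y,x)\notin E$; $\{x,y\}\in E$ means either orientation; a path is a sequence $[x_1,\dots,x_k]$ ($k\ge1$) with $\{x_i,x_{i+1}\}\in E$, of length $k-1$; $d_G$ is the path metric. An iterated graph system $\mathfrak R$ consists of a connected graph $G_1=(S,E)$, a finite set $\mathcal T$ of types, a surjective typing $\mathfrak t:E\to\mathcal T$ and non-empty gluing rules $I_t\subseteq S\times S$. With $W_m=S^m$, $W_\#=\bigcup_{m\ge1}W_m$, $[w]_k=w_1\cdots w_k$, the replacement graphs $G_m=(W_m,E_m)$ are defined recursively: $(w,v)\in E_{m+1}$ iff either (1) $[w]_m=[v]_m$ and $(w_{m+1},v_{m+1})\in E$ (type $\mathfrak t(w_{m+1},v_{m+1})$), or (2) $([w]_m,[v]_m)\in E_m$ and $(w_{m+1},v_{m+1})\in I_{\mathfrak t([w]_m,[v]_m)}$ (type $\mathfrak t([w]_m,[v]_m)$). For $n\ge k$, $\pi_{n,k}$ maps a path of $G_n$ to the path of $G_k$ obtained by replacing each vertex $w$ by $[w]_k$ and deleting consecutive repetitions. A path $\theta$ in $G_m$ is an intersection path if there are paths $\theta_n$ in $G_n$ ($n\in\mathbb N$) with $\theta_m=\theta$, $\pi_{n,k}(\theta_n)=\theta_k$ for all $n>k$, and $\lim_n\operatorname{len}(\theta_n)<\infty$. $\mathcal N(w)=\{v\in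 W_{|w|}:$ there is an intersection path from $w$ to $v\}$; $\mathfrak R$ is of bounded geometry if $\sup_{w\in W_\#}\operatorname{diam}_{d_{G_{|w|}}}(\mathcal N(w))<\infty$. Sierpiński gasket: $S=\{0,1,2\}$, $E=\{(0,1),(1,2),(0,2)\}$ of types $a,b,c$ respectively, $I_a=\{(1,0)\}$, $I_b=\{(2,1)\}$, $I_c=\{(2,0)\}$. Pentagonal Sierpiński carpet: $S=\{0,1,2,3,4\}$, $E=\{(0,1),(1,2),(2,3),(3,4),(4,0)\}$ of types $a,b,c,d,e$ respectively, $I_a=\{(1,0),(2,4)\}$, $I_b=\{(2,1),(3,0)\}$, $I_c=\{(3,2),(4,1)\}$, $I_d=\{(4,3),(0,2)\}$, $I_e=\{(0,4),(1,3)\}$. *)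

theory Defs
  imports Main "HOL-Library.Extended_Nat"
begin

definition gpath :: "'v set \<Rightarrow> ('v \<times> 'v) set \<Rightarrow> 'v list \<Rightarrow> bool" where
  "gpath V Ed p \<longleftrightarrow> p \<noteq> [] \<and> set p \<subseteq> V \<and>
     successively (\<lambda>x y. (x, y) \<in> Ed \<or> (y, x) \<in> Ed) p"

definition plen :: "'v list \<Rightarrow> nat" where
  "plen p = length p - 1"

definition gdist :: "'v set \<Rightarrow> ('v \<times> 'v) set \<Rightarrow> 'v \<Rightarrow> 'v \<Rightarrow> enat" where
  "gdist V Ed x y = (INF p \<in> {p. gpath V Ed p \<and> hd p = x \<and> last p = y}. enat (plen p))"

definition gdiam :: "'v set \<Rightarrow> ('v \<times> 'v) set \<Rightarrow> 'v set \<Rightarrow> enat" where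
  "gdiam V Ed A = (SUP x \<in> A. SUP y \<in> A. gdist V Ed x y)"

definition gconnected :: "'v set \<Rightarrow> ('v \<times> 'v) set \<Rightarrow> bool" where
  "gconnected V Ed \<longleftrightarrow> (\<forall>x\<in>V. \<forall>y\<in>V. \<exists>p. gpath V Ed p \<and> hd p = x \<and> last p = y)"

text \<open>Parameters: S (vertices of G_1), E (edges of G_1), T (types),
  t (typing, meaningful on E), I (gluing rules).\<close>

definition IGS :: "'a set \<Rightarrow> ('a \<times> 'a) set \<Rightarrow> 't set \<Rightarrow> ('a \<times> 'a \<Rightarrow> 't)
                    \<Rightarrow> ('t \<Rightarrow> ('a \<times> 'a) set) \<Rightarrow> bool" where
  "IGS S E T t I \<longleftrightarrow> finite S \<and> S \<noteq> {} \<and> E \<subseteq> S \<times> S \<and>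
     (\<forall>x y. (x, y) \<in> E \<longrightarrow> (y, x) \<notin> E) \<and> gconnected S E \<and>
     finite T \<and> t ` E = T \<and> (\<forall>\<tau>\<in>T. I \<tau> \<noteq> {} \<and> I \<tau> \<subseteq> S \<times> S)"

text \<open>Words of length m over S. A word w_1 ... w_m is the list [w_1, ..., w_m];
  hence the prefix [w]_k is take k w and the last letter is appended at the end.\<close>

definition words :: "'a set \<Rightarrow> nat \<Rightarrow> 'a list set" where
  "words S m = {w. length w = m \<and> set w \<subseteq> S}"

definition words_all :: "'a set \<Rightarrow> 'a list set" where
  "words_all S = (\<Union>m\<in>{1..}. words S m)"

text \<open>Typed edges of the replacement graph G_m: triples (w, v, type).\<close>

fun ledges :: "'a set \<Rightarrow> ('a \<times> 'a) set \<Rightarrow> ('a \<times> 'a \<Rightarrow> 't) \<Rightarrow> ('t \<Rightarrow> ('a \<times> 'a) set)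
               \<Rightarrow> nat \<Rightarrow> ('a list \<times> 'a list \<times> 't) set" where
  "ledges S E t I 0 = {}"
| "ledges S E t I (Suc 0) = {([x], [y], t (x, y)) | x y. (x, y) \<in> E}"
| "ledges S E t I (Suc (Suc m)) =
     {(u @ [x], u @ [y], t (x, y)) | u x y. u \<in> words S (Suc m) \<and> (x, y) \<in> E}
   \<union> {(u @ [x], u' @ [y], \<tau>) | u u' x y \<tau>.
        (u, u', \<tau>) \<in> ledges S E t I (Suc m) \<and> (x, y) \<in> I \<tau>}"

definition redges :: "'a set \<Rightarrow> ('a \<times> 'a) set \<Rightarrow> ('a \<times> 'a \<Rightarrow> 't) \<Rightarrow> ('t \<Rightarrow> ('a \<times> 'a) set)
               \<Rightarrow> nat \<Rightarrow> ('a list \<times> 'a list) set" where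
  "redges S E t I m = {(w, v). \<exists>\<tau>. (w, v, \<tau>) \<in> ledges S E t I m}"

definition proj :: "nat \<Rightarrow> 'a list list \<Rightarrow> 'a list list" where
  "proj k p = remdups_adj (map (take k) p)"

definition intersection_path :: "'a set \<Rightarrow> ('a \<times> 'a) set \<Rightarrow> ('a \<times> 'a \<Rightarrow> 't)
     \<Rightarrow> ('t \<Rightarrow> ('a \<times> 'a) set) \<Rightarrow> nat \<Rightarrow> 'a list list \<Rightarrow> bool" where
  "intersection_path S E t I m \<theta> \<longleftrightarrow> 1 \<le> m \<and>
     (\<exists>\<Theta> :: nat \<Rightarrow> 'a list list.
        (\<forall>n\<ge>1. gpath (words S n) (redges S E t I n) (\<Theta> n)) \<and>
        \<Theta> m = \<theta> \<and>
        (\<forall>n k. 1 \<le> k \<and> k < n \<longrightarrow> proj k (\<Theta> n) = \<Theta> k) \<and>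
        convergent (\<lambda>n. real (plen (\<Theta> n))))"

definition NB :: "'a set \<Rightarrow> ('a \<times> 'a) set \<Rightarrow> ('a \<times> 'a \<Rightarrow> 't)
     \<Rightarrow> ('t \<Rightarrow> ('a \<times> 'a) set) \<Rightarrow> 'a list \<Rightarrow> 'a list set" where
  "NB S E t I w = {v \<in> words S (length w). \<exists>\<theta>.
      intersection_path S E t I (length w) \<theta> \<and> hd \<theta> = w \<and> last \<theta> = v}"

definition bounded_geometry :: "'a set \<Rightarrow> ('a \<times> 'a) set \<Rightarrow> ('a \<times> 'a \<Rightarrow> 't)
     \<Rightarrow> ('t \<Rightarrow> ('a \<times> 'a) set) \<Rightarrow> bool" where
  "bounded_geometry S E t I \<longleftrightarrow>
     (SUP w \<in> words_all S.
        gdiam (words S (length w)) (redges S E t I (length w)) (NB S E t I w)) < \<infinity>"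

datatype sg_type = SGa | SGb | SGc

definition sg_S :: "nat set" where "sg_S = {0, 1, 2}"
definition sg_E :: "(nat \<times> nat) set" where "sg_E = {(0, 1), (1, 2), (0, 2)}"
definition sg_T :: "sg_type set" where "sg_T = {SGa, SGb, SGc}"
definition sg_t :: "nat \<times> nat \<Rightarrow> sg_type" where
  "sg_t e = (if e = (0, 1) then SGa else if e = (1, 2) then SGb else SGc)"
fun sg_I :: "sg_type \<Rightarrow> (nat \<times> nat) set" where
  "sg_I SGa = {(1, 0)}"
| "sg_I SGb = {(2, 1)}"
| "sg_I SGc = {(2, 0)}"

datatype pc_type = PCa | PCb | PCc | PCd | PCe

definition pc_S :: "nat set" where "pc_S = {0, 1, 2, 3, 4}"
definition pc_E :: "(nat \<times> nat) set" where
  "pc_E = {(0, 1), (1, 2), (2, 3), (3, 4), (4, 0)}"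
definition pc_T :: "pc_type set" where "pc_T = {PCa, PCb, PCc, PCd, PCe}"
definition pc_t :: "nat \<times> nat \<Rightarrow> pc_type" where
  "pc_t e = (if e = (0, 1) then PCa else if e = (1, 2) then PCb
             else if e = (2, 3) then PCc else if e = (3, 4) then PCd else PCe)"
fun pc_I :: "pc_type \<Rightarrow> (nat \<times> nat) set" where
  "pc_I PCa = {(1, 0), (2, 4)}"
| "pc_I PCb = {(2, 1), (3, 0)}"
| "pc_I PCc = {(3, 2), (4, 1)}"
| "pc_I PCd = {(4, 3), (0, 2)}"
| "pc_I PCe = {(0, 4), (1, 3)}"

end

theory Submission
  imports Defs Complex_Main
begin


lemma ledges_Suc:
  "(p, q, \<tau>) \<in> ledges S E t I (Suc n) \<longleftrightarrow>
    (\<exists>u x y. p = u @ [x] \<and> q = u @ [y] \<and> u \<in> words S n \<and> (x, y) \<in> E \<and> \<tau> = t (x, y)) \<or>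
    (\<exists>u v x y. p = u @ [x] \<and> q = v @ [y] \<and> (u, v, \<tau>) \<in> ledges S E t I n \<and> (x, y) \<in> I \<tau>)"
proof (cases n)
  case 0
  have w0: "words S 0 = {[]}" by (auto simp: words_def)
  show ?thesis using 0 by (auto simp: w0)
next
  case (Suc m)
  then show ?thesis by auto
qed

lemma ledges_0[simp]: "ledges S E t I 0 = {}" by simp

lemma ledges_nonempty:
  "(p, q, \<tau>) \<in> ledges S E t I n \<Longrightarrow> p \<noteq> [] \<and> q \<noteq> []"
  by (cases n) (auto simp: ledges_Suc simp del: ledges.simps)



definition lk1 :: "('a \<times> 'a) set \<Rightarrow> ('a \<times> 'a \<Rightarrow> 't) \<Rightarrow> ('t \<Rightarrow> ('a \<times> 'a) set) \<Rightarrow> 'a \<Rightarrow> 'a \<Rightarrow> 'a \<Rightarrow> 'a \<Rightarrow> bool" where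
  "lk1 E t I d c f e \<longleftrightarrow> ((d,f)\<in>E \<and> (c,e)\<in>I(t(d,f))) \<or> ((f,d)\<in>E \<and> (e,c)\<in>I(t(f,d)))"
definition sidepair :: "('t \<Rightarrow> ('a \<times> 'a) set) \<Rightarrow> 'a \<Rightarrow> 'a \<Rightarrow> bool" where
  "sidepair I d c \<longleftrightarrow> d \<noteq> c \<and> (\<exists>\<tau> x y. ((d,x)\<in>I \<tau> \<and> (c,y)\<in>I \<tau>) \<or> ((x,d)\<in>I \<tau> \<and> (y,c)\<in>I \<tau>))"
definition innerside :: "('a \<times> 'a) set \<Rightarrow> ('a \<times> 'a \<Rightarrow> 't) \<Rightarrow> ('t \<Rightarrow> ('a \<times> 'a) set) \<Rightarrow> 'a \<Rightarrow> 'a \<Rightarrow> 'a \<Rightarrow> 'a \<Rightarrow> bool" where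
  "innerside E t I a d c b \<longleftrightarrow> ((a,b)\<in>E \<and> (\<exists>x y. (d,x)\<in>I(t(a,b)) \<and> (c,y)\<in>I(t(a,b)))) \<or>
     ((b,a)\<in>E \<and> (\<exists>x y. (x,d)\<in>I(t(b,a)) \<and> (y,c)\<in>I(t(b,a))))"
definition triside :: "('t \<Rightarrow> ('a \<times> 'a) set) \<Rightarrow> 'a \<Rightarrow> 'a \<Rightarrow> 'a \<Rightarrow> bool" where
  "triside I a d c \<longleftrightarrow> (\<exists>\<tau> x y z. ((a,x)\<in>I \<tau> \<and> (d,y)\<in>I \<tau> \<and> (c,z)\<in>I \<tau>) \<or> ((x,a)\<in>I \<tau> \<and> (y,d)\<in>I \<tau> \<and> (z,c)\<in>I \<tau>))"

locale sysA =
  fixes S :: "'a set" and E :: "('a \<times> 'a) set" and t :: "'a \<times> 'a \<Rightarrow> 't" and I :: "'t \<Rightarrow> ('a \<times> 'a) set"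
  assumes E_irr: "(x,x) \<notin> E"
  and E_asym: "(x,y)\<in>E \<Longrightarrow> (y,x)\<notin>E"
  and I_fun1: "(x,y)\<in>I \<tau> \<Longrightarrow> (x,y')\<in>I \<tau> \<Longrightarrow> y=y'"
  and I_fun2: "(x,y)\<in>I \<tau> \<Longrightarrow> (x',y)\<in>I \<tau> \<Longrightarrow> x=x'"
  and A5: "\<not> lk1 E t I d d f e"
  and A6: "lk1 E t I d c f e \<Longrightarrow> lk1 E t I d c f' e' \<Longrightarrow> f=f' \<and> e=e'"
  and T3a: "lk1 E t I d c f e \<Longrightarrow> sidepair I d c \<Longrightarrow> f=c \<and> e=d"
  and T3b: "lk1 E t I d c f e \<Longrightarrow> \<not> sidepair I d c \<Longrightarrow> \<not> sidepair I f e"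
  and T1: "d\<noteq>c \<Longrightarrow> innerside E t I a d c b \<Longrightarrow> innerside E t I a d c b' \<Longrightarrow> b=b'"
  and T2: "d\<noteq>c \<Longrightarrow> innerside E t I a d c b \<Longrightarrow> \<not> triside I a d c"
begin

abbreviation "L \<equiv> ledges S E t I"

definition lk :: "nat \<Rightarrow> 'a list \<Rightarrow> 'a \<Rightarrow> 'a list \<Rightarrow> 'a \<Rightarrow> bool" where
  "lk n u c v e \<longleftrightarrow> (\<exists>\<tau>. ((u,v,\<tau>)\<in>L n \<and> (c,e)\<in>I \<tau>) \<or> ((v,u,\<tau>)\<in>L n \<and> (e,c)\<in>I \<tau>))"
definition gl :: "nat \<Rightarrow> 'a list \<Rightarrow> 'a \<Rightarrow> 'a \<Rightarrow> 'a list \<Rightarrow> 'a \<Rightarrow> 'a \<Rightarrow> bool" where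
  "gl n u d c v f e \<longleftrightarrow> (\<exists>\<tau>. ((u,v,\<tau>)\<in>L n \<and> (d,f)\<in>I \<tau> \<and> (c,e)\<in>I \<tau>) \<or> ((v,u,\<tau>)\<in>L n \<and> (f,d)\<in>I \<tau> \<and> (e,c)\<in>I \<tau>))"
definition glueside :: "nat \<Rightarrow> 'a list \<Rightarrow> 'a \<Rightarrow> 'a \<Rightarrow> 'a list \<Rightarrow> bool" where
  "glueside n u d c v \<longleftrightarrow> (\<exists>\<tau>. ((u,v,\<tau>)\<in>L n \<and> (\<exists>x y. (d,x)\<in>I \<tau> \<and> (c,y)\<in>I \<tau>)) \<or>
       ((v,u,\<tau>)\<in>L n \<and> (\<exists>x y. (x,d)\<in>I \<tau> \<and> (y,c)\<in>I \<tau>)))"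
definition closed :: "nat \<Rightarrow> ('a list \<times> 'a) set \<Rightarrow> bool" where
  "closed n C \<longleftrightarrow> (\<forall>u c v e. (u,c)\<in>C \<longrightarrow> lk n u c v e \<longrightarrow> (v,e)\<in>C)"

lemma lk_sym: "lk n u c v e \<longleftrightarrow> lk n v e u c" unfolding lk_def by blast
lemma lk1_sym: "lk1 E t I d c f e \<longleftrightarrow> lk1 E t I f e d c" unfolding lk1_def by blast
lemma gl_swap: "gl n u d c v f e \<longleftrightarrow> gl n u c d v e f" unfolding gl_def by blast
lemma gl_flip: "gl n u d c v f e \<longleftrightarrow> gl n v f e u d c" unfolding gl_def by blast
lemma sidepair_sym: "sidepair I d c \<longleftrightarrow> sidepair I c d" unfolding sidepair_def by blast

lemma lk_Suc: "lk (Suc n) (u@[d]) c (v@[f]) e \<longleftrightarrow> (u = v \<and> u \<in> words S n \<and> lk1 E t I d c f e) \<or> gl n u d c v f e"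
  unfolding lk_def gl_def lk1_def ledges_Suc by auto

lemma lk_nonempty: "lk n u c v e \<Longrightarrow> u \<noteq> [] \<and> v \<noteq> []"
  unfolding lk_def by (metis ledges_nonempty)

lemma noloop: "(p,p,\<tau>) \<notin> L n"
proof (induction n arbitrary: p \<tau>)
  case 0 then show ?case by simp
next
  case (Suc n) then show ?case unfolding ledges_Suc using E_irr by (auto simp del: ledges.simps)
qed

lemma Buniq: "((p,q,\<tau>) \<in> L n \<longrightarrow> (p,q,\<tau>') \<in> L n \<longrightarrow> \<tau> = \<tau>') \<and> ((p,q,\<tau>) \<in> L n \<longrightarrow> (q,p,\<tau>') \<notin> L n)"
proof (induction n arbitrary: p q \<tau> \<tau>')
  case 0 then show ?case by simp
next
  case (Suc n)
  show ?case
  proof (intro conjI impI)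
    assume a: "(p,q,\<tau>) \<in> L (Suc n)" and b: "(p,q,\<tau>') \<in> L (Suc n)"
    from a obtain u x v y where pq: "p = u@[x]" "q = v@[y]" and
      ca: "(u = v \<and> (x,y)\<in>E \<and> \<tau> = t(x,y)) \<or> ((u,v,\<tau>) \<in> L n \<and> (x,y) \<in> I \<tau>)"
      unfolding ledges_Suc by blast
    from b pq have cb: "(u = v \<and> (x,y)\<in>E \<and> \<tau>' = t(x,y)) \<or> ((u,v,\<tau>') \<in> L n \<and> (x,y) \<in> I \<tau>')"
      unfolding ledges_Suc by auto
    show "\<tau> = \<tau>'" using ca cb Suc.IH noloop by metis
  next
    assume a: "(p,q,\<tau>) \<in> L (Suc n)"
    show "(q,p,\<tau>') \<notin> L (Suc n)"
    proof
      assume b: "(q,p,\<tau>') \<in> L (Suc n)"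
      from a obtain u x v y where pq: "p = u@[x]" "q = v@[y]" and
        ca: "(u = v \<and> (x,y)\<in>E \<and> \<tau> = t(x,y)) \<or> ((u,v,\<tau>) \<in> L n \<and> (x,y) \<in> I \<tau>)"
        unfolding ledges_Suc by blast
      from b pq have cb: "(u = v \<and> (y,x)\<in>E) \<or> ((v,u,\<tau>') \<in> L n)"
        unfolding ledges_Suc by auto
      show False using ca cb Suc.IH noloop E_asym by metis
    qed
  qed
qed

end

context sysA begin

definition gg :: "nat \<Rightarrow> 'a list \<Rightarrow> 'a \<Rightarrow> 'a \<Rightarrow> 'a \<Rightarrow> 'a list \<Rightarrow> 'a \<Rightarrow> bool" where
  "gg n u a d c z b \<longleftrightarrow> (\<exists>\<tau>. ((u,z,\<tau>)\<in>L n \<and> (a,b)\<in>I \<tau> \<and> (\<exists>x y. (d,x)\<in>I \<tau> \<and> (c,y)\<in>I \<tau>)) \<or>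
       ((z,u,\<tau>)\<in>L n \<and> (b,a)\<in>I \<tau> \<and> (\<exists>x y. (x,d)\<in>I \<tau> \<and> (y,c)\<in>I \<tau>)))"

lemma glueside_Suc:
  assumes "glueside (Suc n) w d c v"
  shows "\<exists>u a b z. w = u@[a] \<and> ((v = u@[b] \<and> innerside E t I a d c b) \<or> (v = z@[b] \<and> gg n u a d c z b))"
proof -
  from assms obtain \<tau> where h: "((w,v,\<tau>)\<in>L (Suc n) \<and> (\<exists>x y. (d,x)\<in>I \<tau> \<and> (c,y)\<in>I \<tau>)) \<or>
       ((v,w,\<tau>)\<in>L (Suc n) \<and> (\<exists>x y. (x,d)\<in>I \<tau> \<and> (y,c)\<in>I \<tau>))" unfolding glueside_def by blast
  then show ?thesis
  proof
    assume h1: "(w,v,\<tau>)\<in>L (Suc n) \<and> (\<exists>x y. (d,x)\<in>I \<tau> \<and> (c,y)\<in>I \<tau>)"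
    then obtain x y where xy: "(d,x)\<in>I \<tau>" "(c,y)\<in>I \<tau>" by blast
    from h1 have "(w,v,\<tau>)\<in>L (Suc n)" by blast
    then have "(\<exists>u a b. w = u @ [a] \<and> v = u @ [b] \<and> u \<in> words S n \<and> (a, b) \<in> E \<and> \<tau> = t (a, b)) \<or>
    (\<exists>u z a b. w = u @ [a] \<and> v = z @ [b] \<and> (u, z, \<tau>) \<in> L n \<and> (a, b) \<in> I \<tau>)"
      by (rule ledges_Suc[THEN iffD1])
    then show ?thesis
    proof (elim disjE exE conjE)
      fix u a b assume "w = u @ [a]" "v = u @ [b]" "u \<in> words S n" "(a, b) \<in> E" "\<tau> = t (a, b)"
      then show ?thesis using xy unfolding innerside_def by blast
    next
      fix u z a b assume "w = u @ [a]" "v = z @ [b]" "(u, z, \<tau>) \<in> L n" "(a, b) \<in> I \<tau>"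
      then show ?thesis using xy unfolding gg_def by blast
    qed
  next
    assume h1: "(v,w,\<tau>)\<in>L (Suc n) \<and> (\<exists>x y. (x,d)\<in>I \<tau> \<and> (y,c)\<in>I \<tau>)"
    then obtain x y where xy: "(x,d)\<in>I \<tau>" "(y,c)\<in>I \<tau>" by blast
    from h1 have "(v,w,\<tau>)\<in>L (Suc n)" by blast
    then have "(\<exists>u b a. v = u @ [b] \<and> w = u @ [a] \<and> u \<in> words S n \<and> (b, a) \<in> E \<and> \<tau> = t (b, a)) \<or>
    (\<exists>z u b a. v = z @ [b] \<and> w = u @ [a] \<and> (z, u, \<tau>) \<in> L n \<and> (b, a) \<in> I \<tau>)"
      by (rule ledges_Suc[THEN iffD1])
    then show ?thesis
    proof (elim disjE exE conjE)
      fix u b a assume "v = u @ [b]" "w = u @ [a]" "u \<in> words S n" "(b, a) \<in> E" "\<tau> = t (b, a)"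
      then show ?thesis using xy unfolding innerside_def by blast
    next
      fix z u b a assume "v = z @ [b]" "w = u @ [a]" "(z, u, \<tau>) \<in> L n" "(b, a) \<in> I \<tau>"
      then show ?thesis using xy unfolding gg_def by blast
    qed
  qed
qed

lemma gg_glueside: "gg n u a d c z b \<Longrightarrow> glueside n u d c z"
  unfolding gg_def glueside_def by blast

lemma gg_triside: "gg n u a d c z b \<Longrightarrow> triside I a d c"
  unfolding gg_def triside_def by blast

lemma gg_uniq: "gg n u a d c z b \<Longrightarrow> gg n u a d c z b' \<Longrightarrow> b = b'"
  unfolding gg_def by (metis Buniq I_fun1 I_fun2)

lemma Dinv: "d \<noteq> c \<Longrightarrow> glueside n u d c v \<Longrightarrow> glueside n u d c v' \<Longrightarrow> v = v'"
proof (induction n arbitrary: u v v')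
  case 0 then show ?case by (simp add: glueside_def)
next
  case (Suc n)
  from glueside_Suc[OF Suc.prems(2)] obtain u1 a b z where
    A: "u = u1@[a]" "(v = u1@[b] \<and> innerside E t I a d c b) \<or> (v = z@[b] \<and> gg n u1 a d c z b)" by blast
  from glueside_Suc[OF Suc.prems(3)] obtain u2 a2 b' z' where
    B: "u = u2@[a2]" "(v' = u2@[b'] \<and> innerside E t I a2 d c b') \<or> (v' = z'@[b'] \<and> gg n u2 a2 d c z' b')" by blast
  from A B have eq: "u2 = u1" "a2 = a" by auto
  show ?case using A(2) B(2) unfolding eq
    using T1[OF Suc.prems(1)] T2[OF Suc.prems(1)] gg_triside gg_glueside gg_uniq Suc.IH[OF Suc.prems(1)]
    by metis
qed

end

context sysA begin

lemma lk_Suc_E: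
  assumes "lk (Suc n) (u@[d]) c y e"
  obtains g where "y = u@[g]" "lk1 E t I d c g e"
  | v g where "y = v@[g]" "gl n u d c v g e"
proof -
  from lk_nonempty[OF assms] obtain v g where y: "y = v@[g]"
    by (metis append_butlast_last_id)
  from assms[unfolded y lk_Suc] y that show ?thesis by blast
qed

lemma gl_diag: "gl n v f f z g e \<Longrightarrow> g = e \<and> lk n v f z g"
proof -
  assume "gl n v f f z g e"
  then obtain \<tau> where h: "((v,z,\<tau>)\<in>L n \<and> (f,g)\<in>I \<tau> \<and> (f,e)\<in>I \<tau>) \<or> ((z,v,\<tau>)\<in>L n \<and> (g,f)\<in>I \<tau> \<and> (e,f)\<in>I \<tau>)"
    unfolding gl_def by blast
  then have "g = e" using I_fun1 I_fun2 by blast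
  with h show ?thesis unfolding lk_def by blast
qed

lemma gl_sidepair: "d \<noteq> c \<Longrightarrow> gl n u d c v f e \<Longrightarrow> sidepair I d c \<and> sidepair I f e"
  unfolding gl_def sidepair_def by (metis I_fun1 I_fun2)

lemma gl_glueside: "gl n u d c v f e \<Longrightarrow> glueside n u d c v"
  unfolding gl_def glueside_def by blast

lemma gl_uniq: "d \<noteq> c \<Longrightarrow> gl n u d c z f e \<Longrightarrow> gl n u d c z' f' e' \<Longrightarrow> z = z' \<and> f = f' \<and> e = e'"
proof -
  assume dc: "d \<noteq> c" and a: "gl n u d c z f e" and b: "gl n u d c z' f' e'"
  have zz: "z' = z" using Dinv[OF dc gl_glueside[OF a] gl_glueside[OF b]] by simp
  from a b show ?thesis unfolding zz gl_def by (metis Buniq I_fun1 I_fun2)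
qed

lemma lk1_nodiag: "lk1 E t I d c f e \<Longrightarrow> d \<noteq> c \<and> f \<noteq> e"
  using A5 lk1_sym by metis

lemma bc: "\<exists>C. (w,c)\<in>C \<and> finite C \<and> card C \<le> 4 \<and> closed n C"
proof (induction n arbitrary: w c)
  case 0
  show ?case by (rule exI[of _ "{(w,c)}"]) (simp add: closed_def lk_def)
next
  case (Suc n)
  show ?case
  proof (cases "w = []")
    case True
    then show ?thesis
      by (intro exI[of _ "{(w,c)}"]) (auto simp add: closed_def dest: lk_nonempty)
  next
    case False
    then obtain u d where w: "w = u@[d]" by (metis append_butlast_last_id)
    show ?thesis
    proof (cases "c = d")
      case True
      from Suc.IH obtain C0 where C0: "(u,d)\<in>C0" "finite C0" "card C0 \<le> 4" "closed n C0" by blast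
      let ?C = "(\<lambda>(v,f). (v@[f],f)) ` C0"
      have "closed (Suc n) ?C"
        unfolding closed_def
      proof (intro allI impI)
        fix x c' y e assume xm: "(x,c') \<in> ?C" and l: "lk (Suc n) x c' y e"
        from xm obtain v f where vf: "(v,f)\<in>C0" "x = v@[f]" "c' = f" by auto
        from l[unfolded vf] show "(y,e) \<in> ?C"
        proof (cases rule: lk_Suc_E)
          case (1 g) then show ?thesis using A5 by blast
        next
          case (2 z g)
          from gl_diag[OF 2(2)] have "g = e" "lk n v f z g" by auto
          with C0(4) vf(1) have "(z,g)\<in>C0" unfolding closed_def by blast
          then show ?thesis using 2(1) \<open>g = e\<close> by force
        qed
      qed
      moreover have "(w,c) \<in> ?C" using C0(1) w True by force
      moreover have "card ?C \<le> 4" using C0(3) card_image_le[OF C0(2)] le_trans by blast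
      ultimately show ?thesis using C0(2) by blast
    next
      case cd0: False
      have cd: "d \<noteq> c" using cd0 by simp
      show ?thesis
      proof (cases "sidepair I d c")
        case nsp: False
        show ?thesis
        proof (cases "\<exists>f e. lk1 E t I d c f e")
          case True
          then obtain f0 e0 where fe: "lk1 E t I d c f0 e0" by blast
          let ?C = "{(u@[d],c), (u@[f0],e0)}"
          have "closed (Suc n) ?C"
            unfolding closed_def
          proof (intro allI impI)
            fix x c' y e assume xm: "(x,c') \<in> ?C" and l: "lk (Suc n) x c' y e"
            from xm show "(y,e) \<in> ?C"
            proof
              assume xs: "(x,c') = (u@[d],c)"
              from l[unfolded] xs have l': "lk (Suc n) (u@[d]) c y e" by simp
              then show ?thesis
              proof (cases rule: lk_Suc_E)
                case (1 g) then show ?thesis using A6[OF fe] by blast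
              next
                case (2 v g) then show ?thesis using gl_sidepair cd nsp by metis
              qed
            next
              assume "(x,c') \<in> {(u@[f0],e0)}"
              then have xs: "x = u@[f0]" "c' = e0" by auto
              from l xs have l': "lk (Suc n) (u@[f0]) e0 y e" by simp
              then show ?thesis
              proof (cases rule: lk_Suc_E)
                case (1 g) then show ?thesis using A6 lk1_sym fe by blast
              next
                case (2 v g) then show ?thesis using gl_sidepair T3b[OF fe nsp] lk1_nodiag[OF fe] by metis
              qed
            qed
          qed
          moreover have "card ?C \<le> 4" by (rule order_trans[OF card_insert_le_m1]) auto
          ultimately show ?thesis using w by (intro exI[of _ ?C]) auto
        next
          case False
          let ?C = "{(u@[d],c)}"
          have "closed (Suc n) ?C"
            unfolding closed_def
          proof (intro allI impI)
            fix x c' y e assume xm: "(x,c') \<in> ?C" and l: "lk (Suc n) x c' y e"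
            from l xm have l': "lk (Suc n) (u@[d]) c y e" by simp
            then show "(y,e) \<in> ?C"
            proof (cases rule: lk_Suc_E)
              case (1 g) then show ?thesis using False by blast
            next
              case (2 v g) then show ?thesis using gl_sidepair cd nsp by metis
            qed
          qed
          then show ?thesis using w by (intro exI[of _ ?C]) auto
        qed
      next
        case sp: True
        have sp2: "sidepair I c d" using sp sidepair_sym by blast
        have in1: "lk1 E t I d c g h \<Longrightarrow> g = c \<and> h = d" for g h using T3a sp by blast
        have in2: "lk1 E t I c d g h \<Longrightarrow> g = d \<and> h = c" for g h using T3a sp2 by blast
        show ?thesis
        proof (cases "\<exists>z f e. gl n u d c z f e")
          case True
          then obtain z0 f0 e0 where G: "gl n u d c z0 f0 e0" by blast
          have sp3: "sidepair I f0 e0" using gl_sidepair[OF cd G] by blast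
          have fe0: "f0 \<noteq> e0" using sp3 unfolding sidepair_def by blast
          have sp4: "sidepair I e0 f0" using sp3 sidepair_sym by blast
          have G': "gl n z0 f0 e0 u d c" using G gl_flip by blast
          let ?C = "{(u@[d],c), (u@[c],d), (z0@[f0],e0), (z0@[e0],f0)}"
          have "closed (Suc n) ?C"
            unfolding closed_def
          proof (intro allI impI)
            fix x c' y e assume xm: "(x,c') \<in> ?C" and l: "lk (Suc n) x c' y e"
            from xm consider "(x,c') = (u@[d],c)" | "(x,c') = (u@[c],d)" | "(x,c') = (z0@[f0],e0)"
               | "(x,c') = (z0@[e0],f0)" by blast
            then show "(y,e) \<in> ?C"
            proof cases
              case 1
              from l 1 have l': "lk (Suc n) (u@[d]) c y e" by simp
              then show ?thesis
              proof (cases rule: lk_Suc_E)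
                case (1 g) then show ?thesis using in1 by blast
              next
                case (2 v g) then show ?thesis using gl_uniq[OF cd G] by blast
              qed
            next
              case 2
              from l 2 have l': "lk (Suc n) (u@[c]) d y e" by simp
              then show ?thesis
              proof (cases rule: lk_Suc_E)
                case (1 g) then show ?thesis using in2 by blast
              next
                case (2 v g)
                then have "gl n u d c v e g" using gl_swap by blast
                then show ?thesis using gl_uniq[OF cd G] 2(1) by blast
              qed
            next
              case 3
              from l 3 have l': "lk (Suc n) (z0@[f0]) e0 y e" by simp
              then show ?thesis
              proof (cases rule: lk_Suc_E)
                case (1 g) then show ?thesis using T3a[OF _ sp3] by blast
              next
                case (2 v g) then show ?thesis using gl_uniq[OF fe0 G'] by blast
              qed
            next
              case 4
              from l 4 have l': "lk (Suc n) (z0@[e0]) f0 y e" by simp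
              then show ?thesis
              proof (cases rule: lk_Suc_E)
                case (1 g) then show ?thesis using T3a[OF _ sp4] by blast
              next
                case (2 v g)
                then have "gl n z0 f0 e0 v e g" using gl_swap by blast
                then show ?thesis using gl_uniq[OF fe0 G'] 2(1) by blast
              qed
            qed
          qed
          moreover have "card ?C \<le> 4"
            using card_length[of "[(u@[d],c), (u@[c],d), (z0@[f0],e0), (z0@[e0],f0)]"] by simp
          ultimately show ?thesis using w by (intro exI[of _ ?C]) auto
        next
          case False
          let ?C = "{(u@[d],c), (u@[c],d)}"
          have "closed (Suc n) ?C"
            unfolding closed_def
          proof (intro allI impI)
            fix x c' y e assume xm: "(x,c') \<in> ?C" and l: "lk (Suc n) x c' y e"
            from xm consider "(x,c') = (u@[d],c)" | "(x,c') = (u@[c],d)" by blast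
            then show "(y,e) \<in> ?C"
            proof cases
              case 1
              from l 1 have l': "lk (Suc n) (u@[d]) c y e" by simp
              then show ?thesis
              proof (cases rule: lk_Suc_E)
                case (1 g) then show ?thesis using in1 by blast
              next
                case (2 v g) then show ?thesis using False by blast
              qed
            next
              case 2
              from l 2 have l': "lk (Suc n) (u@[c]) d y e" by simp
              then show ?thesis
              proof (cases rule: lk_Suc_E)
                case (1 g) then show ?thesis using in2 by blast
              next
                case (2 v g) then show ?thesis using False gl_swap by blast
              qed
            qed
          qed
          moreover have "card ?C \<le> 4" by (rule order_trans[OF card_insert_le_m1]) auto
          ultimately show ?thesis using w by (intro exI[of _ ?C]) auto
        qed
      qed
    qed
  qed
qed

end


lemma gpath_shorten:
  "gpath V Ed p \<Longrightarrow> \<exists>q. gpath V Ed q \<and> hd q = hd p \<and> last q = last p \<and> set q \<subseteq> set p \<and> distinct q"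
proof (induction "length p" arbitrary: p rule: less_induct)
  case less
  show ?case
  proof (cases "distinct p")
    case True then show ?thesis using less.prems by blast
  next
    case False
    then obtain xs ys zs y where p: "p = xs@[y]@ys@[y]@zs" using not_distinct_decomp by blast
    let ?p = "xs@[y]@zs"
    have g: "gpath V Ed ?p"
      using less.prems unfolding p gpath_def
      by (auto simp: successively_append_iff successively_Cons)
    have "length ?p < length p" unfolding p by simp
    from less.hyps[OF this g] obtain q where q: "gpath V Ed q" "hd q = hd ?p" "last q = last ?p"
      "set q \<subseteq> set ?p" "distinct q" by blast
    have "hd ?p = hd p" "last ?p = last p" unfolding p by (cases xs; simp)+
    moreover have "set ?p \<subseteq> set p" unfolding p by auto
    ultimately show ?thesis using q by auto
  qed
qed

lemma gdist_le: "gpath V Ed q \<Longrightarrow> gdist V Ed (hd q) (last q) \<le> enat (plen q)"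
  unfolding gdist_def by (rule INF_lower) auto

lemma gpath_rev: "gpath V Ed p \<Longrightarrow> gpath V Ed (rev p)"
  unfolding gpath_def by (auto simp: successively_rev elim: successively_mono)

lemma gpath_app: "gpath V Ed p \<Longrightarrow> gpath V Ed q \<Longrightarrow> last p = hd q \<Longrightarrow> gpath V Ed (p @ tl q)"
proof -
  let ?R = "\<lambda>x y. (x, y) \<in> Ed \<or> (y, x) \<in> Ed"
  assume a: "gpath V Ed p" "gpath V Ed q" "last p = hd q"
  then have q: "q = hd q # tl q" unfolding gpath_def by simp
  from a(2) have sq: "successively ?R (hd q # tl q)"
    using q unfolding gpath_def by metis
  then have s2: "successively ?R (tl q)" and l: "tl q = [] \<or> ?R (hd q) (hd (tl q))"
    unfolding successively_Cons by auto
  have s1: "successively ?R p" "p \<noteq> []" "set p \<subseteq> V" using a(1) unfolding gpath_def by auto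
  have "set (tl q) \<subseteq> V" using a(2) unfolding gpath_def by (meson list.set_sel(2) subset_code(1))
  moreover have "successively ?R (p @ tl q)"
    unfolding successively_append_iff using s1 s2 l a(3) by simp
  ultimately show ?thesis using s1 unfolding gpath_def by simp
qed

lemma remdups_adj_len_eq: "length (remdups_adj xs) = length xs \<Longrightarrow> successively (\<noteq>) xs"
proof (induction xs rule: remdups_adj.induct)
  case 1 then show ?case by simp
next
  case (2 x) then show ?case by simp
next
  case (3 x y xs)
  show ?case
  proof (cases "x = y")
    case True
    then have "length (remdups_adj (x # y # xs)) \<le> length (x # xs)" using remdups_adj_length[of "x # xs"] by simp
    then show ?thesis using 3(3) by simp
  next
    case False
    then have "length (remdups_adj (y # xs)) = length (y # xs)" using 3(3) by simp
    then have "successively (\<noteq>) (y # xs)" using 3(2) False by blast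
    then show ?thesis using False by simp
  qed
qed

lemma successively_inv:
  assumes "successively R xs" "xs \<noteq> []" "P (hd xs)" "\<And>x y. R x y \<Longrightarrow> P x \<Longrightarrow> P y"
  shows "\<forall>x\<in>set xs. P x"
  using assms
proof (induction xs)
  case Nil then show ?case by simp
next
  case (Cons a xs)
  show ?case
  proof (cases xs)
    case Nil then show ?thesis using Cons by simp
  next
    case (Cons b ys)
    have "R a b" "successively R xs" using Cons.prems(1) Cons by auto
    then have "P b" using Cons.prems(3,4) by simp
    then have "\<forall>x\<in>set xs. P x" using Cons.IH[OF \<open>successively R xs\<close>] Cons.prems(4) Cons by simp
    then show ?thesis using Cons.prems(3) by simp
  qed
qed



lemma successively_conj: "successively P xs \<Longrightarrow> successively Q xs \<Longrightarrow> successively (\<lambda>x y. P x y \<and> Q x y) xs"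
  by (induction xs rule: induct_list012) auto

context sysA begin

lemma step_lk:
  assumes "length p = Suc n" "length p' = Suc n" "take n p \<noteq> take n p'"
    "(p,p') \<in> redges S E t I (Suc n) \<or> (p',p) \<in> redges S E t I (Suc n)"
  shows "lk n (take n p) (last p) (take n p') (last p')"
proof -
  have pe: "p = take n p @ [last p]" using assms(1)
    by (metis append_butlast_last_id butlast_conv_take diff_Suc_1 list.size(3) nat.distinct(1))
  have pe': "p' = take n p' @ [last p']" using assms(2)
    by (metis append_butlast_last_id butlast_conv_take diff_Suc_1 list.size(3) nat.distinct(1))
  obtain u x v y where uv: "p = u@[x]" "p' = v@[y]" "u \<noteq> v" "u = take n p" "v = take n p'" "x = last p" "y = last p'"
    using pe pe' assms(3) by blast
  from assms(4) obtain \<tau> where "(u@[x], v@[y], \<tau>) \<in> L (Suc n) \<or> (v@[y], u@[x], \<tau>) \<in> L (Suc n)"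
    using assms(4) unfolding redges_def uv(1,2) by blast
  then have "((u,v,\<tau>) \<in> L n \<and> (x,y) \<in> I \<tau>) \<or> ((v,u,\<tau>) \<in> L n \<and> (y,x) \<in> I \<tau>)"
    unfolding ledges_Suc using uv(3) by auto
  then show ?thesis unfolding lk_def uv(4-7)[symmetric] by blast
qed

lemma ip_card:
  assumes "intersection_path S E t I m \<theta>"
  shows "card (set \<theta>) \<le> 4"
proof -
  obtain \<Theta> where m1: "1 \<le> m" and G: "\<forall>n\<ge>1. gpath (words S n) (redges S E t I n) (\<Theta> n)"
    and Tm: "\<Theta> m = \<theta>" and P: "\<forall>n k. 1 \<le> k \<and> k < n \<longrightarrow> proj k (\<Theta> n) = \<Theta> k"
    and conv: "convergent (\<lambda>n. real (plen (\<Theta> n)))"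
    using assms unfolding intersection_path_def by blast
  define Ln where "Ln n = plen (\<Theta> n)" for n
  have mono: "Ln k \<le> Ln n" if "1 \<le> k" "k < n" for k n
  proof -
    have "\<Theta> k = remdups_adj (map (take k) (\<Theta> n))" using P that unfolding proj_def by auto
    then have "length (\<Theta> k) \<le> length (\<Theta> n)" using remdups_adj_length[of "map (take k) (\<Theta> n)"] by simp
    then show ?thesis unfolding Ln_def plen_def by simp
  qed
  obtain K where K: "\<forall>n. real (Ln n) \<le> K"
    using convergent_imp_Bseq[OF conv] unfolding Ln_def by (auto elim!: BseqE)
  have "\<exists>n\<ge>m. Ln n = Ln (Suc n)"
  proof (rule ccontr)
    assume "\<not> ?thesis"
    then have inc: "\<forall>n\<ge>m. Ln n < Ln (Suc n)" using mono m1 by (metis le_less lessI order_trans)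
    have "Ln (m + j) \<ge> j" for j
    proof (induction j)
      case 0 then show ?case by simp
    next
      case (Suc j) then show ?case using inc[rule_format, of "m+j"] by simp
    qed
    then have "real (nat \<lceil>K\<rceil> + 1) \<le> real (Ln (m + (nat \<lceil>K\<rceil> + 1)))" by (meson of_nat_le_iff)
    also have "\<dots> \<le> K" using K by blast
    finally show False by linarith
  qed
  then obtain n where n: "n \<ge> m" "Ln n = Ln (Suc n)" by blast
  define Q where "Q = \<Theta> (Suc n)"
  have gQ: "gpath (words S (Suc n)) (redges S E t I (Suc n)) Q" using G Q_def by simp
  have gn: "gpath (words S n) (redges S E t I n) (\<Theta> n)" using G n m1 by simp
  have Tn: "\<Theta> n = remdups_adj (map (take n) Q)" using P n m1 unfolding proj_def Q_def by auto
  have "length (\<Theta> n) = length Q" using n(2) gQ gn unfolding Ln_def plen_def gpath_def Q_def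
    by (metis Suc_diff_1 length_greater_0_conv)
  then have "successively (\<noteq>) (map (take n) Q)" using Tn remdups_adj_len_eq by (metis length_map)
  then have s1: "successively (\<lambda>p p'. take n p \<noteq> take n p') Q" unfolding successively_map .
  have s2: "successively (\<lambda>p p'. (p,p') \<in> redges S E t I (Suc n) \<or> (p',p) \<in> redges S E t I (Suc n)) Q"
    using gQ unfolding gpath_def by blast
  have lenQ: "\<forall>p\<in>set Q. length p = Suc n" using gQ unfolding gpath_def words_def by auto
  have s3: "successively (\<lambda>p p'. lk n (take n p) (last p) (take n p') (last p')) Q"
    using successively_conj[OF s1 s2] by (rule successively_mono) (use step_lk lenQ in blast)
  obtain C where C: "(take n (hd Q), last (hd Q)) \<in> C" "finite C" "card C \<le> 4" "closed n C"
    using bc by blast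
  have QC: "\<forall>p\<in>set Q. (take n p, last p) \<in> C"
    using successively_inv[OF s3, of "\<lambda>p. (take n p, last p) \<in> C"] C(1,4) gQ
    unfolding closed_def gpath_def by blast
  have "\<theta> = remdups_adj (map (take m) Q)" using P n m1 Tm unfolding proj_def Q_def by auto
  then have "set \<theta> = take m ` set Q" by simp
  also have "\<dots> \<subseteq> (\<lambda>(u,c). take m u) ` C"
  proof
    fix x assume "x \<in> take m ` set Q"
    then obtain p where p: "p \<in> set Q" "x = take m p" by blast
    have "take m p = take m (take n p)" using n(1) by (simp add: min_def)
    then show "x \<in> (\<lambda>(u,c). take m u) ` C" using QC p by force
  qed
  finally have "card (set \<theta>) \<le> card ((\<lambda>(u,c). take m u) ` C)"
    using C(2) by (simp add: card_mono)
  also have "\<dots> \<le> card C" using card_image_le[OF C(2)] .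
  finally show ?thesis using C(3) by simp
qed

end

context sysA begin

lemma nb_path:
  assumes "v \<in> NB S E t I w"
  shows "\<exists>q. gpath (words S (length w)) (redges S E t I (length w)) q \<and> hd q = w \<and> last q = v \<and> plen q \<le> 3"
proof -
  from assms obtain \<theta> where ip: "intersection_path S E t I (length w) \<theta>" "hd \<theta> = w" "last \<theta> = v"
    unfolding NB_def by blast
  have g: "gpath (words S (length w)) (redges S E t I (length w)) \<theta>"
    using ip(1) unfolding intersection_path_def by metis
  from gpath_shorten[OF g] obtain q where q: "gpath (words S (length w)) (redges S E t I (length w)) q"
    "hd q = hd \<theta>" "last q = last \<theta>" "set q \<subseteq> set \<theta>" "distinct q" by blast
  have "length q = card (set q)" using distinct_card[OF q(5)] by simp
  also have "\<dots> \<le> card (set \<theta>)" using q(4) by (simp add: card_mono)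
  also have "\<dots> \<le> 4" using ip_card[OF ip(1)] .
  finally have "plen q \<le> 3" unfolding plen_def by simp
  then show ?thesis using q ip by auto
qed

theorem bg: "bounded_geometry S E t I"
proof -
  have d: "gdiam (words S (length w)) (redges S E t I (length w)) (NB S E t I w) \<le> enat 6" for w
    unfolding gdiam_def
  proof (intro SUP_least)
    fix x y assume x: "x \<in> NB S E t I w" and y: "y \<in> NB S E t I w"
    let ?V = "words S (length w)" and ?R = "redges S E t I (length w)"
    obtain q1 where q1: "gpath ?V ?R q1" "hd q1 = w" "last q1 = x" "plen q1 \<le> 3" using nb_path[OF x] by blast
    obtain q2 where q2: "gpath ?V ?R q2" "hd q2 = w" "last q2 = y" "plen q2 \<le> 3" using nb_path[OF y] by blast
    have ne: "q1 \<noteq> []" "q2 \<noteq> []" using q1 q2 unfolding gpath_def by auto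
    let ?r = "rev q1 @ tl q2"
    have gr: "gpath ?V ?R ?r" using gpath_app[OF gpath_rev[OF q1(1)] q2(1)] q1(2) q2(2) ne
      by (simp add: last_rev)
    have h: "hd ?r = x" using q1(3) ne by (simp add: hd_rev)
    have l: "last ?r = y"
    proof (cases "tl q2 = []")
      case True
      then have "q2 = [hd q2]" using ne by (metis list.collapse)
      then have "y = w" using q2 by (metis last_ConsL)
      then show ?thesis using True q1(2) ne by (simp add: last_rev)
    next
      case False
      then show ?thesis using q2(3) ne by (metis last_appendR last_tl)
    qed
    have L: "length ?r = length q1 + (length q2 - 1)" by simp
    have a: "length q1 \<le> 4" using q1(4) unfolding plen_def by linarith
    have b: "length q2 - 1 \<le> 3" using q2(4) unfolding plen_def by linarith
    have "length ?r \<le> 7" unfolding L using a b by linarith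
    then have "plen ?r \<le> 6" unfolding plen_def by linarith
    then have "gdist ?V ?R x y \<le> enat (plen ?r)" using gdist_le[OF gr] h l by simp
    also have "\<dots> \<le> enat 6" using \<open>plen ?r \<le> 6\<close> by simp
    finally show "gdist ?V ?R x y \<le> enat 6" .
  qed
  have "(SUP w \<in> words_all S. gdiam (words S (length w)) (redges S E t I (length w)) (NB S E t I w)) \<le> enat 6"
    using d by (intro SUP_least) auto
  moreover have "enat 6 < \<infinity>" by simp
  ultimately show ?thesis unfolding bounded_geometry_def
    by (rule order_le_less_trans)
qed

end


lemma gconn_helper:
  assumes "\<forall>x\<in>S. \<forall>y\<in>S. x = y \<or> ((x,y)\<in>E \<or> (y,x)\<in>E) \<or> (\<exists>z\<in>S. ((x,z)\<in>E \<or> (z,x)\<in>E) \<and> ((z,y)\<in>E \<or> (y,z)\<in>E))"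
  shows "gconnected S E"
  unfolding gconnected_def
proof (intro ballI)
  fix x y assume x: "x \<in> S" and y: "y \<in> S"
  from assms x y consider "x = y" | "(x,y)\<in>E \<or> (y,x)\<in>E" | z where "z\<in>S" "(x,z)\<in>E \<or> (z,x)\<in>E" "(z,y)\<in>E \<or> (y,z)\<in>E"
    by blast
  then show "\<exists>p. gpath S E p \<and> hd p = x \<and> last p = y"
  proof cases
    case 1 then show ?thesis using x by (intro exI[of _ "[x]"]) (simp add: gpath_def)
  next
    case 2 then show ?thesis using x y by (intro exI[of _ "[x,y]"]) (simp add: gpath_def)
  next
    case 3 then show ?thesis using x y by (intro exI[of _ "[x,z,y]"]) (simp add: gpath_def)
  qed
qed

lemma ex_sg: "(\<exists>\<tau>::sg_type. P \<tau>) \<longleftrightarrow> P SGa \<or> P SGb \<or> P SGc"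
  by (metis sg_type.exhaust)
lemma ex_pc: "(\<exists>\<tau>::pc_type. P \<tau>) \<longleftrightarrow> P PCa \<or> P PCb \<or> P PCc \<or> P PCd \<or> P PCe"
  by (metis pc_type.exhaust)

interpretation sg: sysA sg_S sg_E sg_t sg_I
proof
  show "\<And>x. (x, x) \<notin> sg_E" by (auto simp: sg_E_def)
  show "\<And>x y. (x, y) \<in> sg_E \<Longrightarrow> (y, x) \<notin> sg_E" by (auto simp: sg_E_def)
  show "\<And>x y \<tau> y'. (x, y) \<in> sg_I \<tau> \<Longrightarrow> (x, y') \<in> sg_I \<tau> \<Longrightarrow> y = y'" by (case_tac \<tau>) auto
  show "\<And>x y \<tau> x'. (x, y) \<in> sg_I \<tau> \<Longrightarrow> (x', y) \<in> sg_I \<tau> \<Longrightarrow> x = x'" by (case_tac \<tau>) auto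
  show "\<And>d f e. \<not> lk1 sg_E sg_t sg_I d d f e" by (auto simp: lk1_def sg_E_def sg_t_def)
  show "\<And>d c f e f' e'. lk1 sg_E sg_t sg_I d c f e \<Longrightarrow> lk1 sg_E sg_t sg_I d c f' e' \<Longrightarrow> f = f' \<and> e = e'"
    by (auto simp: lk1_def sg_E_def sg_t_def)
  show "\<And>d c f e. lk1 sg_E sg_t sg_I d c f e \<Longrightarrow> sidepair sg_I d c \<Longrightarrow> f = c \<and> e = d"
    by (auto simp: lk1_def sg_E_def sg_t_def sidepair_def ex_sg)
  show "\<And>d c f e. lk1 sg_E sg_t sg_I d c f e \<Longrightarrow> \<not> sidepair sg_I d c \<Longrightarrow> \<not> sidepair sg_I f e"
    by (auto simp: lk1_def sg_E_def sg_t_def sidepair_def ex_sg)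
  show "\<And>d c a b b'. d \<noteq> c \<Longrightarrow> innerside sg_E sg_t sg_I a d c b \<Longrightarrow> innerside sg_E sg_t sg_I a d c b' \<Longrightarrow> b = b'"
    by (auto simp: innerside_def sg_E_def sg_t_def)
  show "\<And>d c a b. d \<noteq> c \<Longrightarrow> innerside sg_E sg_t sg_I a d c b \<Longrightarrow> \<not> triside sg_I a d c"
    by (auto simp: innerside_def sg_E_def sg_t_def)
qed

lemma T3b_from:
  assumes "\<And>d c f e. lk1 E t I d c f e \<Longrightarrow> sidepair I d c \<Longrightarrow> f = c \<and> e = d"
  shows "lk1 E t I d c f e \<Longrightarrow> \<not> sidepair I d c \<Longrightarrow> \<not> sidepair I f e"
proof
  assume l: "lk1 E t I d c f e" and n: "\<not> sidepair I d c" and s: "sidepair I f e"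
  have "lk1 E t I f e d c" using l unfolding lk1_def by blast
  from assms[OF this s] have "d = e" "c = f" by auto
  with s n show False unfolding sidepair_def by blast
qed

definition "pcLK = {(0, 1, 1, 0), (0, 2, 1, 4), (0, 3, 4, 1), (0, 4, 4, 0), (1, 0, 0, 1), (1, 2, 2, 1), (1, 3, 2, 0), (1, 4, 0, 2), (2, 0, 1, 3), (2, 1, 1, 2), (2, 3, 3, 2), (2, 4, 3, 1), (3, 0, 4, 2), (3, 1, 2, 4), (3, 2, 2, 3), (3, 4, 4, 3), (4, 0, 0, 4), (4, 1, 0, 3), (4, 2, 3, 0), (4, 3, 3, 4)}"
definition "pcSP = {(0, 1), (0, 4), (1, 0), (1, 2), (2, 1), (2, 3), (3, 2), (3, 4), (4, 0), (4, 3)}"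
definition "pcIS = {(0, 1, 1, 1), (0, 1, 2, 1), (0, 2, 1, 1), (0, 2, 2, 1), (0, 3, 3, 4), (0, 3, 4, 4), (0, 4, 3, 4), (0, 4, 4, 4), (1, 0, 0, 0), (1, 0, 4, 0), (1, 2, 2, 2), (1, 2, 3, 2), (1, 3, 2, 2), (1, 3, 3, 2), (1, 4, 0, 0), (1, 4, 4, 0), (2, 0, 0, 1), (2, 0, 1, 1), (2, 1, 0, 1), (2, 1, 1, 1), (2, 3, 3, 3), (2, 3, 4, 3), (2, 4, 3, 3), (2, 4, 4, 3), (3, 0, 0, 4), (3, 0, 4, 4), (3, 1, 1, 2), (3, 1, 2, 2), (3, 2, 1, 2), (3, 2, 2, 2), (3, 4, 0, 4), (3, 4, 4, 4), (4, 0, 0, 0), (4, 0, 1, 0), (4, 1, 0, 0), (4, 1, 1, 0), (4, 2, 2, 3), (4, 2, 3, 3), (4, 3, 2, 3), (4, 3, 3, 3)}"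
definition "pcTS = {(0, 0, 0), (0, 0, 1), (0, 0, 4), (0, 1, 0), (0, 1, 1), (0, 4, 0), (0, 4, 4), (1, 0, 0), (1, 0, 1), (1, 1, 0), (1, 1, 1), (1, 1, 2), (1, 2, 1), (1, 2, 2), (2, 1, 1), (2, 1, 2), (2, 2, 1), (2, 2, 2), (2, 2, 3), (2, 3, 2), (2, 3, 3), (3, 2, 2), (3, 2, 3), (3, 3, 2), (3, 3, 3), (3, 3, 4), (3, 4, 3), (3, 4, 4), (4, 0, 0), (4, 0, 4), (4, 3, 3), (4, 3, 4), (4, 4, 0), (4, 4, 3), (4, 4, 4)}"

lemma pc_lk1: "lk1 pc_E pc_t pc_I d c f e \<Longrightarrow> (d,c,f,e) \<in> pcLK"
  unfolding lk1_def pc_E_def pcLK_def by (elim disjE conjE; simp add: pc_t_def; elim disjE; simp) blast+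
lemma pc_sp: "sidepair pc_I d c \<Longrightarrow> (d,c) \<in> pcSP"
  unfolding sidepair_def ex_pc pcSP_def by (elim conjE disjE exE; simp; elim disjE; simp)
lemma pc_is: "innerside pc_E pc_t pc_I a d c b \<Longrightarrow> (a,d,c,b) \<in> pcIS"
  unfolding innerside_def pc_E_def pcIS_def by (elim disjE conjE exE; simp add: pc_t_def; elim disjE; simp) blast+
lemma pc_ts: "triside pc_I a d c \<Longrightarrow> (a,d,c) \<in> pcTS"
  unfolding triside_def ex_pc pcTS_def pc_I.simps by (elim conjE disjE exE insertE emptyE; simp)

interpretation pc: sysA pc_S pc_E pc_t pc_I
proof
  show "\<And>x. (x, x) \<notin> pc_E" by (auto simp: pc_E_def)
  show "\<And>x y. (x, y) \<in> pc_E \<Longrightarrow> (y, x) \<notin> pc_E" by (auto simp: pc_E_def)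
  show "\<And>x y \<tau> y'. (x, y) \<in> pc_I \<tau> \<Longrightarrow> (x, y') \<in> pc_I \<tau> \<Longrightarrow> y = y'" by (case_tac \<tau>) auto
  show "\<And>x y \<tau> x'. (x, y) \<in> pc_I \<tau> \<Longrightarrow> (x', y) \<in> pc_I \<tau> \<Longrightarrow> x = x'" by (case_tac \<tau>) auto
  show "\<And>d f e. \<not> lk1 pc_E pc_t pc_I d d f e"
  proof
    fix d f e assume "lk1 pc_E pc_t pc_I d d f e"
    from pc_lk1[OF this] show False unfolding pcLK_def by (elim insertE emptyE; simp)
  qed
  show "\<And>d c f e f' e'. lk1 pc_E pc_t pc_I d c f e \<Longrightarrow> lk1 pc_E pc_t pc_I d c f' e' \<Longrightarrow> f = f' \<and> e = e'"
  proof -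
    fix d c f e f' e' assume a: "lk1 pc_E pc_t pc_I d c f e" "lk1 pc_E pc_t pc_I d c f' e'"
    from pc_lk1[OF a(1)] pc_lk1[OF a(2)] show "f = f' \<and> e = e'"
      unfolding pcLK_def by (elim insertE emptyE; simp)
  qed
  show T3a: "\<And>d c f e. lk1 pc_E pc_t pc_I d c f e \<Longrightarrow> sidepair pc_I d c \<Longrightarrow> f = c \<and> e = d"
  proof -
    fix d c f e assume a: "lk1 pc_E pc_t pc_I d c f e" "sidepair pc_I d c"
    from pc_lk1[OF a(1)] pc_sp[OF a(2)] show "f = c \<and> e = d"
      unfolding pcLK_def pcSP_def by (elim insertE emptyE; simp)
  qed
  show "\<And>d c f e. lk1 pc_E pc_t pc_I d c f e \<Longrightarrow> \<not> sidepair pc_I d c \<Longrightarrow> \<not> sidepair pc_I f e"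
    by (rule T3b_from[OF T3a])
  show "\<And>d c a b b'. d \<noteq> c \<Longrightarrow> innerside pc_E pc_t pc_I a d c b \<Longrightarrow> innerside pc_E pc_t pc_I a d c b' \<Longrightarrow> b = b'"
  proof -
    fix d c a b b' assume a: "d \<noteq> c" "innerside pc_E pc_t pc_I a d c b" "innerside pc_E pc_t pc_I a d c b'"
    have "(a,d,c,b) \<in> pcIS \<longrightarrow> (a,d,c,b') \<in> pcIS \<longrightarrow> b = b'"
      unfolding pcIS_def by (intro impI, elim insertE emptyE; simp)
    then show "b = b'" using pc_is[OF a(2)] pc_is[OF a(3)] by blast
  qed
  show "\<And>d c a b. d \<noteq> c \<Longrightarrow> innerside pc_E pc_t pc_I a d c b \<Longrightarrow> \<not> triside pc_I a d c"
  proof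
    fix d c a b assume a: "d \<noteq> c" "innerside pc_E pc_t pc_I a d c b" "triside pc_I a d c"
    have "(a,d,c,b) \<in> pcIS \<longrightarrow> d \<noteq> c \<longrightarrow> (a,d,c) \<notin> pcTS"
      unfolding pcIS_def pcTS_def by (intro impI, elim insertE emptyE; simp)
    then show False using pc_is[OF a(2)] pc_ts[OF a(3)] a(1) by blast
  qed
qed

theorem proposition5p9:
  shows "IGS sg_S sg_E sg_T sg_t sg_I \<and> bounded_geometry sg_S sg_E sg_t sg_I \<and>
         IGS pc_S pc_E pc_T pc_t pc_I \<and> bounded_geometry pc_S pc_E pc_t pc_I"
proof (intro conjI)
  show "bounded_geometry sg_S sg_E sg_t sg_I" by (rule sg.bg)
  show "bounded_geometry pc_S pc_E pc_t pc_I" by (rule pc.bg)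
  have "gconnected sg_S sg_E" by (rule gconn_helper) (auto simp: sg_S_def sg_E_def)
  then show "IGS sg_S sg_E sg_T sg_t sg_I"
    unfolding IGS_def by (auto simp: sg_S_def sg_E_def sg_T_def sg_t_def)
  have "gconnected pc_S pc_E" by (rule gconn_helper) (auto simp: pc_S_def pc_E_def)
  then show "IGS pc_S pc_E pc_T pc_t pc_I"
    unfolding IGS_def by (auto simp: pc_S_def pc_E_def pc_T_def pc_t_def)
qed


end
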